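(* Let $X$ be as in the context. Then $X$ is explosive if all of the following hold: (a) $m(x)x-v(x)\gtrsim x^c$ for some constant $c>2$; (b) $\liminf_{x\to\infty}H_1(x)>1$; (c) for every $q>2$, if $\liminf_{x\to\infty}\dfrac{v(x)}{x^2(\log x)^q}=0$ then $\lim_{x\to\infty}\dfrac{v(x)}{x^2(\log x)^q}=0$.
   Context: Let $\mathbb S\subseteq\mathbb Z_{\ge0}$ be an infinite set and let $X$ be an irreducible continuous-time Markov chain on $\mathbb S$ whose generator acts on functions $f:\mathbb S\to\mathbb R$ by $\mathcal A f(x)=\sum_{\eta\in\mathbb Z}\lambda_\eta(x)\big(f(x+\eta)-f(x)\big)$, where $\lambda_\eta(x)$ is the rate of the jump $x\to x+\eta$ (and $\lambda_\eta(x)=0$ whenever $x+\eta\notin\mathbb S$). Standing assumption: (a) there is a finite set $\Gamma\subset\mathbb Z$ such that $\lambda_\eta\equiv0$ for $\eta\notin\Gamma$; (b) $0\le\lambda_\eta(x)<\infty$ for all $x,\eta$. Define $m(x)=\sum_{\eta}\eta\,\lambda_\eta(x)$, $v(x)=\frac12\sum_\eta\eta^2\lambda_\eta(x)$ (positive on $\mathbb S$), and for a constant $p$ and $x>1$, $H_p(x)=\dfrac{(\log x)(m(x)x-p\,v(x))}{v(x)}$. Notation: $g\gtrsim h$ means there is $C>0$ with $h(x)\le C g(x)$ for all sufficiently large $x\in\mathbb S$; limits are as $x\to\infty$ in $\mathbb S$. $X$ is explosive if $P(T<\infty)>0$, where $T=\lim_k T_k$ and $T_k$ is the $k$-th jump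 time. *)

theory Defs
  imports "HOL-Probability.Probability"
begin

text \<open>Rates: lam eta x is the rate of the jump x -> x + eta. States are integers
(the state space S is a subset of the nonnegative integers).\<close>

definition drift :: "int set \<Rightarrow> (int \<Rightarrow> int \<Rightarrow> real) \<Rightarrow> int \<Rightarrow> real" where
  "drift \<Gamma> lam x = (\<Sum>\<eta>\<in>\<Gamma>. real_of_int \<eta> * lam \<eta> x)"

definition vfun :: "int set \<Rightarrow> (int \<Rightarrow> int \<Rightarrow> real) \<Rightarrow> int \<Rightarrow> real" where
  "vfun \<Gamma> lam x = (1/2) * (\<Sum>\<eta>\<in>\<Gamma>. (real_of_int \<eta>)^2 * lam \<eta> x)"

definition Hfun :: "int set \<Rightarrow> (int \<Rightarrow> int \<Rightarrow> real) \<Rightarrow> real \<Rightarrow> int \<Rightarrow> real" where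
  "Hfun \<Gamma> lam p x = ln (real_of_int x) * (drift \<Gamma> lam x * real_of_int x - p * vfun \<Gamma> lam x)
                        / vfun \<Gamma> lam x"

text \<open>Total rate of leaving x (jumps with eta = 0 do not change the state).\<close>
definition out_rate :: "int set \<Rightarrow> (int \<Rightarrow> int \<Rightarrow> real) \<Rightarrow> int \<Rightarrow> real" where
  "out_rate \<Gamma> lam x = (\<Sum>\<eta>\<in>\<Gamma> - {0}. lam \<eta> x)"

definition jump_prob :: "int set \<Rightarrow> (int \<Rightarrow> int \<Rightarrow> real) \<Rightarrow> int \<Rightarrow> int \<Rightarrow> real" where
  "jump_prob \<Gamma> lam x y = (if y = x then 0 else lam (y - x) x / out_rate \<Gamma> lam x)"

definition irreducible_chain :: "int set \<Rightarrow> (int \<Rightarrow> int \<Rightarrow> real) \<Rightarrow> bool" where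
  "irreducible_chain S lam \<longleftrightarrow>
     (\<forall>x\<in>S. \<forall>y\<in>S. (x, y) \<in> {(a, a + \<eta>) | a \<eta>. a \<in> S \<and> \<eta> \<noteq> 0 \<and> lam \<eta> a > 0}\<^sup>*)"

text \<open>A realization of the (minimal) continuous-time Markov chain started at x0:
  Y n is the state after the n-th jump (Y 0 = x0), Hold n the holding time in Y n,
  so that the n-th jump time is T_n = sum of Hold i for i < n.  The joint law is
  specified on the generating cylinder events: the jump chain has kernel jump_prob and,
  given the jump chain, the holding times are independent, Hold i ~ Exp(out_rate (Y i)).\<close>
definition ctmc_realization ::
  "int set \<Rightarrow> (int \<Rightarrow> int \<Rightarrow> real) \<Rightarrow> int \<Rightarrow> 'w measure \<Rightarrow> (nat \<Rightarrow> 'w \<Rightarrow> int) \<Rightarrow> (nat \<Rightarrow> 'w \<Rightarrow> real) \<Rightarrow> bool" where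
  "ctmc_realization \<Gamma> lam x0 M Y Hold \<longleftrightarrow>
     prob_space M \<and>
     (\<forall>n. Y n \<in> measurable M (count_space UNIV)) \<and>
     (\<forall>n. Hold n \<in> borel_measurable M) \<and>
     (\<forall>n (xs :: nat \<Rightarrow> int) (t :: nat \<Rightarrow> real). (\<forall>i\<le>n. 0 \<le> t i) \<longrightarrow>
        measure M {\<omega> \<in> space M. \<forall>i\<le>n. Y i \<omega> = xs i \<and> t i < Hold i \<omega>}
        = (if xs 0 = x0 then 1 else 0)
          * (\<Prod>i<n. jump_prob \<Gamma> lam (xs i) (xs (Suc i)))
          * (\<Prod>i\<le>n. exp (- out_rate \<Gamma> lam (xs i) * t i)))"

definition explosive :: "'w measure \<Rightarrow> (nat \<Rightarrow> 'w \<Rightarrow> real) \<Rightarrow> bool" where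
  "explosive M Hold \<longleftrightarrow> measure M {\<omega> \<in> space M. convergent (\<lambda>k. \<Sum>i<k. Hold i \<omega>)} > 0"

definition at_top_in :: "int set \<Rightarrow> int filter" where
  "at_top_in S = inf at_top (principal S)"

end

theory Submission
  imports Defs "HOL-Real_Asymp.Real_Asymp"
begin

definition gA :: "real \<Rightarrow> real" where "gA y = 1 / ln (ln y)"
definition f1A :: "real \<Rightarrow> real" where "f1A y = -1 / (y * ln y * (ln (ln y))^2)"
definition f2A :: "real \<Rightarrow> real" where
  "f2A y = (ln (ln y) * (ln y + 1) + 2) / (y^2 * (ln y)^2 * (ln (ln y))^3)"
definition PPA :: "real \<Rightarrow> real" where "PPA y = 1 / (y^2 * ln y * (ln (ln y))^2)"

lemma ln16: fixes y :: real assumes "y \<ge> 16" shows "ln y > 1" "y > 1" "ln (ln y) > 0"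
proof -
  have e: "exp 1 < (16::real)" using exp_le by linarith
  have "ln (exp 1) < ln y" using assms e by (subst ln_less_cancel_iff) auto
  then show "ln y > 1" by simp
  show "y > 1" using assms by simp
  show "ln (ln y) > 0" using \<open>ln y > 1\<close> by (intro ln_gt_zero) 
qed

lemma deriv_g: assumes "16 \<le> y" shows "(gA has_real_derivative f1A y) (at y)"
proof -
  note l = ln16[OF assms]
  show ?thesis unfolding gA_def f1A_def
    apply (rule DERIV_cong)
     apply (auto intro!: derivative_eq_intros simp: l)[1]
    using l by (auto simp: field_simps power2_eq_square)
qed

lemma deriv_f1: assumes "16 \<le> y" shows "(f1A has_real_derivative f2A y) (at y)"
proof -
  note l = ln16[OF assms]
  show ?thesis unfolding f2A_def f1A_def
    apply (rule DERIV_cong)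
     apply (auto intro!: derivative_eq_intros simp: l)[1]
    using l by (auto simp: field_simps power2_eq_square power3_eq_cube)
qed

lemma mono_aux: fixes a b :: real assumes "16 \<le> a" "a \<le> b"
  shows "ln a \<le> ln b" "ln (ln a) \<le> ln (ln b)"
  using ln16[OF assms(1)] assms by auto

lemma f2A_alt: fixes y :: real assumes "16 \<le> y"
  shows "f2A y = 1/(y^2 * ln y * (ln (ln y))^2) + 1/(y^2 * (ln y)^2 * (ln (ln y))^2)
     + 2/(y^2 * (ln y)^2 * (ln (ln y))^3)"
  using ln16[OF assms] unfolding f2A_def by (simp add: field_simps power2_eq_square power3_eq_cube)

lemma den_mono: fixes a b :: real assumes "16 \<le> a" "a \<le> b"
  shows "a^i * (ln a)^j * (ln (ln a))^k \<le> b^i * (ln b)^j * (ln (ln b))^k"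
proof -
  note la = ln16[OF assms(1)] and m = mono_aux[OF assms]
  have "a^i \<le> b^i" using assms by (intro power_mono) auto
  moreover have "(ln a)^j \<le> (ln b)^j" using la m by (intro power_mono) auto
  moreover have "(ln (ln a))^k \<le> (ln (ln b))^k" using la m by (intro power_mono) auto
  ultimately show ?thesis using la assms
    by (intro mult_mono) (auto intro!: mult_nonneg_nonneg)
qed

lemma f2A_mono: fixes a b :: real assumes "16 \<le> a" "a \<le> b" shows "f2A b \<le> f2A a"
proof -
  have b: "16 \<le> b" using assms by simp
  note la = ln16[OF assms(1)] and lb = ln16[OF b]
  have pa: "\<And>i j k. 0 < a^i * (ln a)^j * (ln (ln a))^k" using la by auto
  have t: "\<And>i j k c. 0 \<le> c \<Longrightarrow> c / (b^i * (ln b)^j * (ln (ln b))^k) \<le> c / (a^i * (ln a)^j * (ln (ln a))^k)"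
    by (intro divide_left_mono den_mono assms mult_pos_pos pa) (use pa la lb assms in auto)
  show ?thesis unfolding f2A_alt[OF assms(1)] f2A_alt[OF b]
    using t[of 1 2 1 2] t[of 1 2 2 2] t[of 2 2 2 3] by simp
qed

lemma taylor_bound: fixes x e R :: real assumes "16 \<le> x - R" "\<bar>e\<bar> \<le> R"
  shows "gA (x + e) \<le> gA x + f1A x * e + f2A (x - R) * e^2 / 2"
proof (cases "e = 0")
  case True then show ?thesis by simp
next
  case False
  define diff where "diff = (\<lambda>m::nat. if m = 0 then gA else if m = 1 then f1A else f2A)"
  have D: "\<forall>m t. m < 2 \<and> x - R \<le> t \<and> t \<le> x + R \<longrightarrow> DERIV (diff m) t :> diff (Suc m) t"
  proof (intro allI impI)
    fix m t assume h: "m < (2::nat) \<and> x - R \<le> t \<and> t \<le> x + R"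
    then have t16: "16 \<le> t" using assms by linarith
    show "DERIV (diff m) t :> diff (Suc m) t"
    proof (cases "m = 0")
      case True then show ?thesis using deriv_g[OF t16] by (simp add: diff_def)
    next
      case False then have "m = 1" using h by simp
      then show ?thesis using deriv_f1[OF t16] by (simp add: diff_def)
    qed
  qed
  have "\<exists>t. (if e < 0 then x + e < t \<and> t < x else x < t \<and> t < x + e) \<and>
      gA (x + e) = gA x + f1A x * e + f2A t * e^2 / 2"
    using Taylor[of 2 diff gA "x - R" "x + R" x "x + e", OF _ _ D] assms False
    by (simp add: diff_def numeral_2_eq_2)
  then obtain t where t: "(if e < 0 then x + e < t \<and> t < x else x < t \<and> t < x + e)"
    and eq: "gA (x + e) = gA x + f1A x * e + f2A t * e^2 / 2" by blast
  have tR: "x - R \<le> t" using t assms by (auto split: if_splits)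
  have "f2A t \<le> f2A (x - R)" by (rule f2A_mono[OF assms(1) tR])
  then have "f2A t * e^2 / 2 \<le> f2A (x - R) * e^2 / 2"
    by (intro divide_right_mono mult_right_mono) auto
  then show ?thesis using eq by simp
qed

lemma alg1: fixes p q r s t w :: real assumes "p > 0" "q > 0" "r > 0" "s > 0" "t > 0" "w > 0"
  shows "((r*(q+1)+2)/(p^2*q^2*r^3)) / (1/(s^2*t*w^2)) = (s/p)^2*(t/q)*(w/r)^2*(1 + 1/q + 2/(q*r))"
  using assms by (simp add: field_simps power2_eq_square power3_eq_cube)

lemma asym1: fixes R :: real
  shows "((\<lambda>x. ln x * (f2A (x - R) / PPA x - 1)) \<longlongrightarrow> 1) at_top"
proof -
  define a where "a = (\<lambda>x::real. x / (x - R))"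
  define b where "b = (\<lambda>x::real. ln x / ln (x - R))"
  define c where "c = (\<lambda>x::real. ln (ln x) / ln (ln (x - R)))"
  define sg where "sg = (\<lambda>y::real. 1 + 1 / ln y + 2 / (ln y * ln (ln y)))"
  have a1: "((\<lambda>x. ln x * (a x - 1)) \<longlongrightarrow> 0) at_top" unfolding a_def by real_asymp
  have a2: "(a \<longlongrightarrow> 1) at_top" unfolding a_def by real_asymp
  have b1: "((\<lambda>x. ln x * (b x - 1)) \<longlongrightarrow> 0) at_top" unfolding b_def by real_asymp
  have b2: "(b \<longlongrightarrow> 1) at_top" unfolding b_def by real_asymp
  have c0: "((\<lambda>x::real. ln x * (ln (ln x) - ln (ln (x - R)))) \<longlongrightarrow> 0) at_top" by real_asymp
  have c00: "((\<lambda>x::real. 1 / ln (ln (x - R))) \<longlongrightarrow> 0) at_top" by real_asymp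
  have u0: "((\<lambda>x::real. 1 / ln x) \<longlongrightarrow> 0) at_top" by real_asymp
  have ev: "eventually (\<lambda>x. 16 + \<bar>R\<bar> \<le> x) at_top" by (rule eventually_ge_at_top)
  have c1: "((\<lambda>x. ln x * (c x - 1)) \<longlongrightarrow> 0) at_top"
  proof -
    have X: "((\<lambda>x::real. ln x * (ln (ln x) - ln (ln (x - R))) * (1 / ln (ln (x - R)))) \<longlongrightarrow> 0) at_top"
      using tendsto_mult[OF c0 c00] by simp
    show ?thesis
    proof (rule Lim_transform_eventually[OF X])
      show "\<forall>\<^sub>F x in at_top. ln x * (ln (ln x) - ln (ln (x - R))) * (1 / ln (ln (x - R))) = ln x * (c x - 1)"
        using ev
      proof eventually_elim
        case (elim x)
        then have "16 \<le> x - R" by linarith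
        note l = ln16[OF this]
        show ?case unfolding c_def using l by (simp add: field_simps)
      qed
    qed
  qed
  have c2: "(c \<longlongrightarrow> 1) at_top"
  proof -
    have X: "((\<lambda>x. 1 + ln x * (c x - 1) * (1 / ln x)) \<longlongrightarrow> 1) at_top"
      using tendsto_add[OF tendsto_const tendsto_mult[OF c1 u0], of 1] by simp
    show ?thesis
    proof (rule Lim_transform_eventually[OF X])
      show "\<forall>\<^sub>F x in at_top. 1 + ln x * (c x - 1) * (1 / ln x) = c x"
        using ev
      proof eventually_elim
        case (elim x)
        then have "16 \<le> x" by linarith
        note l = ln16[OF this]
        show ?case using l by (simp add: field_simps)
      qed
    qed
  qed
  have s1: "((\<lambda>x. b x * (1 + 2 * (1 / ln (ln (x - R))))) \<longlongrightarrow> 1 * (1 + 2 * 0)) at_top"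
    by (intro tendsto_intros b2 c00)
  have s2: "((\<lambda>x. sg (x - R)) \<longlongrightarrow> 1) at_top" unfolding sg_def by real_asymp
  have lim: "((\<lambda>x. (ln x * (a x - 1) * (a x + 1) * b x * (c x)^2 + ln x * (b x - 1) * (c x)^2
        + ln x * (c x - 1) * (c x + 1)) * sg (x - R) + b x * (1 + 2 * (1 / ln (ln (x - R)))))
      \<longlongrightarrow> (0 * (1 + 1) * 1 * 1^2 + 0 * 1^2 + 0 * (1 + 1)) * 1 + 1 * (1 + 2 * 0)) at_top"
    by (intro tendsto_intros a1 a2 b1 b2 c1 c2 s2 c00)
  have lim': "((\<lambda>x. (ln x * (a x - 1) * (a x + 1) * b x * (c x)^2 + ln x * (b x - 1) * (c x)^2
        + ln x * (c x - 1) * (c x + 1)) * sg (x - R) + b x * (1 + 2 * (1 / ln (ln (x - R)))))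
      \<longlongrightarrow> 1) at_top" using lim by simp
  show ?thesis
  proof (rule Lim_transform_eventually[OF lim'])
    show "\<forall>\<^sub>F x in at_top. (ln x * (a x - 1) * (a x + 1) * b x * (c x)^2 + ln x * (b x - 1) * (c x)^2
        + ln x * (c x - 1) * (c x + 1)) * sg (x - R) + b x * (1 + 2 * (1 / ln (ln (x - R))))
        = ln x * (f2A (x - R) / PPA x - 1)"
      using ev
    proof eventually_elim
      case (elim x)
      then have x16: "16 \<le> x" and y16: "16 \<le> x - R" by linarith+
      note lx = ln16[OF x16] and ly = ln16[OF y16]
      have "f2A (x - R) / PPA x = (a x)^2 * b x * (c x)^2 * sg (x - R)"
        unfolding a_def b_def c_def sg_def f2A_def PPA_def using lx ly x16 y16
        by (subst alg1) auto
      moreover have "ln x * (sg (x - R) - 1) = b x * (1 + 2 * (1 / ln (ln (x - R))))"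
        unfolding sg_def b_def using ly by (simp add: field_simps)
      ultimately show ?case
        by (simp add: algebra_simps power2_eq_square)
    qed
  qed
qed

lemma asym2: fixes c K :: real assumes "c > 2" "K > 0"
  shows "eventually (\<lambda>x. 1 \<le> x powr c * PPA x * K) at_top"
proof -
  have "filterlim (\<lambda>x::real. x powr c / (x^2 * ln x * (ln (ln x))^2)) at_top at_top"
    using assms(1) by real_asymp
  then have "eventually (\<lambda>x. 1 / K \<le> x powr c / (x^2 * ln x * (ln (ln x))^2)) at_top"
    by (simp add: filterlim_at_top)
  then show ?thesis
  proof eventually_elim
    case (elim x)
    then have "1 \<le> x powr c / (x^2 * ln x * (ln (ln x))^2) * K" using assms(2)
      by (simp add: field_simps)
    then show ?case unfolding PPA_def by simp
  qed
qed

definition ffA :: "int \<Rightarrow> real" where "ffA y = gA (max (real_of_int y) 16)"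

lemma numeric_key:
  fixes m v u P F D X c C d K :: real
  assumes X: "X > 0" and v: "v > 0" and u: "u > 0" and P: "P > 0" and d: "d > 0" and C: "C > 0"
    and D: "D = m * X - v"
    and H: "1 + d < u * D / v"
    and Fb: "u * (F / P - 1) < 1 + d / 2"
    and Xc: "X powr c \<le> C * D"
    and Kb: "1 \<le> X powr c * P * (d / (2 * C * (1 + d)))"
  shows "- X * P * m + F * v \<le> -1"
proof -
  have "0 < X powr c" using X by simp
  then have "0 < C * D" using Xc by linarith
  then have Dp: "D > 0" using C by (simp add: zero_less_mult_iff)
  have key1: "1 \<le> D * P * (d / (2 * (1 + d)))"
  proof -
    have "X powr c * P * (d / (2 * C * (1 + d))) = (X powr c / C) * P * (d / (2 * (1 + d)))"
      using C by (simp add: field_simps)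
    also have "\<dots> \<le> D * P * (d / (2 * (1 + d)))"
      using Xc C P d by (intro mult_right_mono) (auto simp: field_simps)
    finally show ?thesis using Kb by linarith
  qed
  have vb: "v * (1 + d) < u * D" using H v by (simp add: field_simps)
  have Fb2: "u * (F - P) < (1 + d / 2) * P" using Fb P by (simp add: field_simps)
  have main: "v * (F - P) \<le> D * P * ((1 + d / 2) / (1 + d))"
  proof (cases "F - P \<le> 0")
    case True
    then have "v * (F - P) \<le> 0" using v by (simp add: mult_nonneg_nonpos)
    also have "0 \<le> D * P * ((1 + d / 2) / (1 + d))" using Dp P d by simp
    finally show ?thesis .
  next
    case False
    have "v * (F - P) * (1 + d) = (v * (1 + d)) * (F - P)" by simp
    also have "\<dots> \<le> (u * D) * (F - P)" using vb False by (intro mult_right_mono) auto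
    also have "\<dots> = D * (u * (F - P))" by simp
    also have "\<dots> \<le> D * ((1 + d / 2) * P)" using Fb2 Dp by (intro mult_left_mono) auto
    finally have "v * (F - P) * (1 + d) \<le> D * ((1 + d / 2) * P)" .
    then show ?thesis using d by (simp add: field_simps)
  qed
  have s1: "(1 + d / 2) / (1 + d) + d / (2 * (1 + d)) = 1"
  proof -
    have "0 < d * (d * 4)" using d by simp
    then have "4 + (d * 8 + d * (d * 4)) \<noteq> 0" using d by linarith
    then show ?thesis using d by (simp add: field_simps)
  qed
  have "D * P * ((1 + d / 2) / (1 + d)) + D * P * (d / (2 * (1 + d))) = D * P * ((1 + d / 2) / (1 + d) + d / (2 * (1 + d)))"
    by (simp add: distrib_left)
  then have "D * P * ((1 + d / 2) / (1 + d)) + D * P * (d / (2 * (1 + d))) = D * P" using s1 by simp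
  then have "D * P - v * (F - P) \<ge> 1" using main key1 by linarith
  moreover have "- X * P * m + F * v = -(D * P - v * (F - P))" unfolding D by (simp add: algebra_simps)
  ultimately show ?thesis by linarith
qed

lemma drift_ineq:
  fixes S \<Gamma> :: "int set" and lam :: "int \<Rightarrow> int \<Rightarrow> real"
  assumes Gamma_fin: "finite \<Gamma>" and rates_nonneg: "\<forall>\<eta> x. 0 \<le> lam \<eta> x"
    and v_pos: "\<forall>x\<in>S. vfun \<Gamma> lam x > 0"
    and cond_a: "\<exists>c > 2. \<exists>C > 0. \<exists>N. \<forall>x\<in>S. x \<ge> N \<longrightarrow>
                   real_of_int x powr c \<le> C * (drift \<Gamma> lam x * real_of_int x - vfun \<Gamma> lam x)"
    and cond_b: "Liminf (at_top_in S) (\<lambda>x. ereal (Hfun \<Gamma> lam 1 x)) > 1"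
  shows "\<exists>N::int. 16 \<le> N \<and> (\<forall>x\<in>S. N \<le> x \<longrightarrow> (\<Sum>\<eta>\<in>\<Gamma>. lam \<eta> x * (ffA (x + \<eta>) - ffA x)) \<le> -1)"
proof -
  obtain c C N1 where c: "c > 2" "C > 0" and hN1: "\<forall>x\<in>S. x \<ge> N1 \<longrightarrow>
      real_of_int x powr c \<le> C * (drift \<Gamma> lam x * real_of_int x - vfun \<Gamma> lam x)"
    using cond_a by blast
  obtain z where z1: "ereal 1 < ereal z" and z2: "ereal z < Liminf (at_top_in S) (\<lambda>x. ereal (Hfun \<Gamma> lam 1 x))"
    using ereal_dense2[OF cond_b[unfolded one_ereal_def]] by blast
  have "eventually (\<lambda>x. ereal z < ereal (Hfun \<Gamma> lam 1 x)) (at_top_in S)"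
    by (rule less_LiminfD[OF z2])
  then obtain N2 where hN2: "\<forall>x\<ge>N2. x \<in> S \<longrightarrow> z < Hfun \<Gamma> lam 1 x"
    unfolding at_top_in_def eventually_inf_principal eventually_at_top_linorder by auto
  define d where "d = z - 1"
  have d: "d > 0" using z1 by (simp add: d_def)
  define R where "R = Max (insert 0 (abs ` \<Gamma>))"
  have Rb: "\<And>\<eta>. \<eta> \<in> \<Gamma> \<Longrightarrow> \<bar>\<eta>\<bar> \<le> R" unfolding R_def using Gamma_fin by (intro Max_ge) auto
  have R0: "0 \<le> R" unfolding R_def using Gamma_fin by (intro Max_ge) auto
  define K where "K = d / (2 * C * (1 + d))"
  have K: "K > 0" unfolding K_def using d c by simp
  have ev: "eventually (\<lambda>x. 16 + real_of_int R \<le> x \<and> ln x * (f2A (x - real_of_int R) / PPA x - 1) < 1 + d / 2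
      \<and> 1 \<le> x powr c * PPA x * K) at_top"
    using eventually_ge_at_top order_tendstoD(2)[OF asym1[of "real_of_int R"], of "1 + d / 2"]
      asym2[OF c(1) K] d by (auto intro: eventually_conj)
  then obtain X0 where hX0: "\<And>x. x \<ge> X0 \<Longrightarrow> 16 + real_of_int R \<le> x \<and> ln x * (f2A (x - real_of_int R) / PPA x - 1) < 1 + d / 2
      \<and> 1 \<le> x powr c * PPA x * K"
    unfolding eventually_at_top_linorder by blast
  define N where "N = max (max \<lceil>X0\<rceil> (max N1 N2)) (16 + R)"
  show ?thesis
  proof (intro exI[of _ N] conjI ballI impI)
    show "16 \<le> N" unfolding N_def using R0 by simp
    fix x assume xS: "x \<in> S" and xN: "N \<le> x"
    define X where "X = real_of_int x"
    have XX0: "X \<ge> X0" unfolding X_def using xN unfolding N_def by (meson ceiling_le_iff max.boundedE)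
    note hX = hX0[OF XX0]
    have X16: "16 \<le> X - real_of_int R" using hX by simp
    have X16': "16 \<le> X" using X16 R0 by simp
    have step: "ffA (x + \<eta>) - ffA x \<le> f1A X * real_of_int \<eta> + f2A (X - real_of_int R) * (real_of_int \<eta>)^2 / 2"
      if "\<eta> \<in> \<Gamma>" for \<eta>
    proof -
      have eb: "\<bar>real_of_int \<eta>\<bar> \<le> real_of_int R" using Rb[OF that] by linarith
      have "16 \<le> X + real_of_int \<eta>" using X16 eb by linarith
      then have "ffA (x + \<eta>) = gA (X + real_of_int \<eta>)" unfolding ffA_def X_def by simp
      moreover have "ffA x = gA X" unfolding ffA_def X_def using X16' X_def by simp
      ultimately show ?thesis using taylor_bound[OF X16 eb] by simp
    qed
    have "(\<Sum>\<eta>\<in>\<Gamma>. lam \<eta> x * (ffA (x + \<eta>) - ffA x))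
        \<le> (\<Sum>\<eta>\<in>\<Gamma>. lam \<eta> x * (f1A X * real_of_int \<eta> + f2A (X - real_of_int R) * (real_of_int \<eta>)^2 / 2))"
      using step rates_nonneg by (intro sum_mono mult_left_mono) auto
    also have "\<dots> = f1A X * drift \<Gamma> lam x + f2A (X - real_of_int R) * vfun \<Gamma> lam x"
      unfolding drift_def vfun_def
      by (simp add: sum_distrib_left sum.distrib algebra_simps sum_divide_distrib)
    also have "\<dots> = - X * PPA X * drift \<Gamma> lam x + f2A (X - real_of_int R) * vfun \<Gamma> lam x"
    proof -
      note l = ln16[OF X16']
      have "f1A X = - X * PPA X" unfolding f1A_def PPA_def using l X16'
        by (simp add: field_simps power2_eq_square)
      then show ?thesis by simp
    qed
    also have "\<dots> \<le> -1"
    proof (rule numeric_key[where u = "ln X" and D = "drift \<Gamma> lam x * X - vfun \<Gamma> lam x" and c = c and C = C and d = d])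
      note l = ln16[OF X16']
      show "X > 0" using X16' by simp
      show "vfun \<Gamma> lam x > 0" using v_pos xS by simp
      show "ln X > 0" using l by simp
      show "PPA X > 0" unfolding PPA_def using l X16' by simp
      show "d > 0" by (rule d)
      show "C > 0" by (rule c)
      show "drift \<Gamma> lam x * X - vfun \<Gamma> lam x = drift \<Gamma> lam x * X - vfun \<Gamma> lam x" ..
      have "z < Hfun \<Gamma> lam 1 x" using hN2 xS xN unfolding N_def by simp
      then show "1 + d < ln X * (drift \<Gamma> lam x * X - vfun \<Gamma> lam x) / vfun \<Gamma> lam x"
        unfolding Hfun_def d_def X_def by simp
      show "ln X * (f2A (X - real_of_int R) / PPA X - 1) < 1 + d / 2" using hX by simp
      show "X powr c \<le> C * (drift \<Gamma> lam x * X - vfun \<Gamma> lam x)"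
        using hN1 xS xN unfolding N_def X_def by simp
      show "1 \<le> X powr c * PPA X * (d / (2 * C * (1 + d)))" using hX unfolding K_def by simp
    qed
    finally show "(\<Sum>\<eta>\<in>\<Gamma>. lam \<eta> x * (ffA (x + \<eta>) - ffA x)) \<le> -1" .
  qed
qed

locale chainL =
  fixes S \<Gamma> :: "int set" and lam :: "int \<Rightarrow> int \<Rightarrow> real" and x0 :: int
    and M :: "'w measure" and Y :: "nat \<Rightarrow> 'w \<Rightarrow> int" and Hold :: "nat \<Rightarrow> 'w \<Rightarrow> real"
  assumes Gamma_fin: "finite \<Gamma>"
    and rates_supp: "\<forall>\<eta> x. \<eta> \<notin> \<Gamma> \<longrightarrow> lam \<eta> x = 0"
    and rates_nonneg: "\<forall>\<eta> x. 0 \<le> lam \<eta> x"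
    and rates_stay: "\<forall>\<eta> x. x + \<eta> \<notin> S \<longrightarrow> lam \<eta> x = 0"
    and v_pos: "\<forall>x\<in>S. vfun \<Gamma> lam x > 0"
    and realz: "ctmc_realization \<Gamma> lam x0 M Y Hold"
begin

abbreviation "jp \<equiv> jump_prob \<Gamma> lam"
abbreviation "qr \<equiv> out_rate \<Gamma> lam"

sublocale prob_space M using realz unfolding ctmc_realization_def by auto

lemma Ymeas[measurable]: "Y n \<in> measurable M (count_space UNIV)"
  using realz unfolding ctmc_realization_def by auto
lemma Holdmeas[measurable]: "Hold n \<in> borel_measurable M"
  using realz unfolding ctmc_realization_def by auto

definition pp :: "(nat \<Rightarrow> int) \<Rightarrow> nat \<Rightarrow> real" where
  "pp w k = (if w 0 = x0 then 1 else 0) * (\<Prod>i<k. jp (w i) (w (Suc i)))"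

lemma cyl: assumes "\<forall>i\<le>n. 0 \<le> t i"
  shows "measure M {\<omega> \<in> space M. \<forall>i\<le>n. Y i \<omega> = xs i \<and> t i < Hold i \<omega>}
     = pp xs n * (\<Prod>i\<le>n. exp (- qr (xs i) * t i))"
  using realz assms unfolding ctmc_realization_def pp_def by auto

lemma qr_nonneg: "0 \<le> qr x"
  unfolding out_rate_def using rates_nonneg by (auto intro: sum_nonneg)

lemma qr_pos: assumes "x \<in> S" shows "0 < qr x"
proof -
  have "vfun \<Gamma> lam x \<noteq> 0" using v_pos assms by force
  then have "(\<Sum>\<eta>\<in>\<Gamma>. (real_of_int \<eta>)^2 * lam \<eta> x) \<noteq> 0" unfolding vfun_def by auto
  then obtain \<eta> where e: "\<eta> \<in> \<Gamma>" "(real_of_int \<eta>)^2 * lam \<eta> x \<noteq> 0"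
    by (meson sum.neutral)
  then have "\<eta> \<noteq> 0" "lam \<eta> x > 0" using rates_nonneg by (auto simp: less_le)
  then have "lam \<eta> x \<le> qr x" unfolding out_rate_def using e Gamma_fin rates_nonneg
    by (intro member_le_sum) auto
  then show ?thesis using \<open>lam \<eta> x > 0\<close> by linarith
qed

lemma jp_nonneg: "0 \<le> jp x y"
  unfolding jump_prob_def using rates_nonneg qr_nonneg by auto

lemma jp_eta: "jp x (x + \<eta>) = (if \<eta> = 0 then 0 else lam \<eta> x / qr x)"
  unfolding jump_prob_def by auto

lemma jp_sum: assumes "x \<in> S" shows "(\<Sum>\<eta>\<in>\<Gamma>. jp x (x + \<eta>)) = 1"
proof -
  have "(\<Sum>\<eta>\<in>\<Gamma>. jp x (x + \<eta>)) = (\<Sum>\<eta>\<in>\<Gamma> - {0}. lam \<eta> x / qr x)"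
    unfolding jp_eta using Gamma_fin by (intro sum.mono_neutral_cong_right) auto
  also have "\<dots> = qr x / qr x" unfolding out_rate_def by (rule sum_divide_distrib[symmetric])
  also have "\<dots> = 1" using qr_pos[OF assms] by simp
  finally show ?thesis .
qed

lemma jp_nz: assumes "jp x y \<noteq> 0" shows "y \<in> S" "y - x \<in> \<Gamma>" "y \<noteq> x"
proof -
  have "y \<noteq> x" "lam (y - x) x \<noteq> 0" using assms unfolding jump_prob_def by (auto split: if_splits)
  then show "y \<in> S" "y - x \<in> \<Gamma>" "y \<noteq> x" using rates_stay rates_supp by (metis add.commute diff_add_cancel)+
qed

lemma pp_nonneg: "0 \<le> pp w k"
  unfolding pp_def using jp_nonneg by (auto intro: prod_nonneg)

lemma pp_upd: "pp (w(Suc k := y)) (Suc k) = pp w k * jp (w k) y"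
proof -
  have "(\<Prod>i<k. jp ((w(Suc k := y)) i) ((w(Suc k := y)) (Suc i))) = (\<Prod>i<k. jp (w i) (w (Suc i)))"
    by (intro prod.cong) auto
  then show ?thesis unfolding pp_def by simp
qed

definition TT :: "int \<Rightarrow> int \<Rightarrow> int set" where "TT N x = {y. N \<le> y \<and> jp x y \<noteq> 0}"

lemma TT_sub: "TT N x \<subseteq> (\<lambda>\<eta>. x + \<eta>) ` \<Gamma>"
proof
  fix y assume "y \<in> TT N x"
  then have "y - x \<in> \<Gamma>" using jp_nz unfolding TT_def by auto
  then show "y \<in> (\<lambda>\<eta>. x + \<eta>) ` \<Gamma>" by (intro image_eqI[of _ _ "y - x"]) auto
qed

lemma TT_fin: "finite (TT N x)"
  using TT_sub Gamma_fin finite_subset by blast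

lemma TT_reindex:
  "(\<Sum>y\<in>TT N x. jp x y * c y) = (\<Sum>\<eta>\<in>\<Gamma>. jp x (x + \<eta>) * (if N \<le> x + \<eta> then c (x + \<eta>) else 0))"
proof -
  have "(\<Sum>\<eta>\<in>\<Gamma>. jp x (x + \<eta>) * (if N \<le> x + \<eta> then c (x + \<eta>) else 0))
      = (\<Sum>y\<in>(\<lambda>\<eta>. x + \<eta>) ` \<Gamma>. jp x y * (if N \<le> y then c y else 0))"
    by (subst sum.reindex) (auto simp: inj_on_def)
  also have "\<dots> = (\<Sum>y\<in>TT N x. jp x y * c y)"
    using TT_sub Gamma_fin by (intro sum.mono_neutral_cong_right) (auto simp: TT_def)
  finally show ?thesis by simp
qed

definition EE :: "int \<Rightarrow> (nat \<Rightarrow> int) \<Rightarrow> nat \<Rightarrow> nat \<Rightarrow> 'w set" where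
  "EE N w k n = {\<omega> \<in> space M. (\<forall>j\<le>k. Y j \<omega> = w j) \<and> (\<forall>j\<le>k+n. 0 < Hold j \<omega>)
      \<and> (\<forall>i. k < i \<and> i \<le> k + n \<longrightarrow> N \<le> Y i \<omega>)}"

lemma EE_sets[measurable]: "EE N w k n \<in> sets M"
  unfolding EE_def by measurable

lemma base1: "emeasure M (EE N w k 0) = ennreal (pp w k)"
proof -
  have "EE N w k 0 = {\<omega> \<in> space M. \<forall>i\<le>k. Y i \<omega> = w i \<and> (\<lambda>_. 0::real) i < Hold i \<omega>}"
    unfolding EE_def by auto
  then have "measure M (EE N w k 0) = pp w k" using cyl[of k "\<lambda>_. 0" w] by simp
  then show ?thesis by (simp add: emeasure_eq_measure)
qed

end

context chainL begin

lemma EE_union: "EE N w k (Suc n) = (\<Union>y\<in>{N..}. EE N (w(Suc k := y)) (Suc k) n)"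
proof (intro set_eqI iffI)
  fix \<omega> assume h: "\<omega> \<in> EE N w k (Suc n)"
  then have "\<omega> \<in> EE N (w(Suc k := Y (Suc k) \<omega>)) (Suc k) n" "N \<le> Y (Suc k) \<omega>"
    unfolding EE_def by (auto simp: le_Suc_eq)
  then show "\<omega> \<in> (\<Union>y\<in>{N..}. EE N (w(Suc k := y)) (Suc k) n)" by auto
next
  fix \<omega> assume "\<omega> \<in> (\<Union>y\<in>{N..}. EE N (w(Suc k := y)) (Suc k) n)"
  then obtain y where y: "N \<le> y" "\<omega> \<in> EE N (w(Suc k := y)) (Suc k) n" by auto
  have "(\<forall>j\<le>k. Y j \<omega> = w j)"
  proof (intro allI impI)
    fix j assume "j \<le> k"
    then have "j \<le> Suc k" "j \<noteq> Suc k" by auto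
    then show "Y j \<omega> = w j" using y(2) unfolding EE_def by auto
  qed
  moreover have "Y (Suc k) \<omega> = y" using y(2) unfolding EE_def by auto
  moreover have "\<forall>i. k < i \<and> i \<le> k + Suc n \<longrightarrow> N \<le> Y i \<omega>"
  proof (intro allI impI)
    fix i assume "k < i \<and> i \<le> k + Suc n"
    then have "i = Suc k \<or> (Suc k < i \<and> i \<le> Suc k + n)" by auto
    then show "N \<le> Y i \<omega>" using y \<open>Y (Suc k) \<omega> = y\<close> unfolding EE_def by auto
  qed
  ultimately show "\<omega> \<in> EE N w k (Suc n)" using y(2) unfolding EE_def by auto
qed

lemma EE_disj: "disjoint_family_on (\<lambda>y. EE N (w(Suc k := y)) (Suc k) n) A"
  unfolding disjoint_family_on_def EE_def by auto

lemma EE_mono: "EE N w k (Suc n) \<subseteq> EE N w k n"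
  unfolding EE_def by auto

lemma EE_mono0: "EE N w k n \<subseteq> EE N w k 0"
  unfolding EE_def by auto

lemma EE_null: assumes "jp (w k) y = 0" shows "EE N (w(Suc k := y)) (Suc k) n \<in> null_sets M"
proof -
  have "emeasure M (EE N (w(Suc k := y)) (Suc k) 0) = 0"
    unfolding base1 pp_upd using assms by simp
  then have "emeasure M (EE N (w(Suc k := y)) (Suc k) n) = 0"
    using emeasure_mono[OF EE_mono0[of N "w(Suc k := y)" "Suc k" n] EE_sets] by simp
  then show ?thesis by auto
qed

lemma split:
  assumes phi: "phi \<in> borel_measurable M"
  shows "(\<integral>\<^sup>+\<omega>. phi \<omega> * indicator (EE N w k (Suc n)) \<omega> \<partial>M)
    = (\<Sum>y\<in>TT N (w k). \<integral>\<^sup>+\<omega>. phi \<omega> * indicator (EE N (w(Suc k := y)) (Suc k) n) \<omega> \<partial>M)"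
proof -
  define F where "F = (\<lambda>y. EE N (w(Suc k := y)) (Suc k) n)"
  define U where "U = (\<Union>y\<in>{N..} - TT N (w k). F y)"
  have U: "U \<in> null_sets M" unfolding U_def F_def
    by (intro null_sets_UN' EE_null) (auto simp: TT_def)
  have ae: "AE \<omega> in M. phi \<omega> * indicator (EE N w k (Suc n)) \<omega> = (\<Sum>y\<in>TT N (w k). phi \<omega> * indicator (F y) \<omega>)"
    using AE_not_in[OF U]
  proof eventually_elim
    case (elim \<omega>)
    have "indicator (EE N w k (Suc n)) \<omega> = (indicator (\<Union>(F ` TT N (w k))) \<omega> :: ennreal)"
    proof -
      have "\<omega> \<in> EE N w k (Suc n) \<longleftrightarrow> \<omega> \<in> \<Union>(F ` TT N (w k))"
        using elim unfolding EE_union U_def F_def by (auto simp: TT_def)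
      then show ?thesis by (simp add: indicator_def)
    qed
    also have "\<dots> = (\<Sum>y\<in>TT N (w k). indicator (F y) \<omega>)"
      unfolding F_def by (intro indicator_UN_disjoint TT_fin EE_disj)
    finally show ?case by (simp add: sum_distrib_left)
  qed
  have "(\<integral>\<^sup>+\<omega>. phi \<omega> * indicator (EE N w k (Suc n)) \<omega> \<partial>M)
      = (\<integral>\<^sup>+\<omega>. (\<Sum>y\<in>TT N (w k). phi \<omega> * indicator (F y) \<omega>) \<partial>M)"
    by (rule nn_integral_cong_AE[OF ae])
  also have "\<dots> = (\<Sum>y\<in>TT N (w k). \<integral>\<^sup>+\<omega>. phi \<omega> * indicator (F y) \<omega> \<partial>M)"
    unfolding F_def by (intro nn_integral_sum) (use phi in measurable)
  finally show ?thesis unfolding F_def .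
qed

end

definition K0 :: real where "K0 = 1 / (1 - exp (-1))"

context chainL begin

lemma base2: assumes wS: "w k \<in> S"
  shows "(\<integral>\<^sup>+\<omega>. ennreal (Hold k \<omega>) * indicator (EE N w k 0) \<omega> \<partial>M) \<le> ennreal (K0 * pp w k / qr (w k))"
proof -
  define Q where "Q = qr (w k)"
  have Q: "Q > 0" unfolding Q_def using qr_pos[OF wS] .
  define E0 where "E0 = EE N w k 0"
  define A where "A = (\<lambda>m::nat. E0 \<inter> {\<omega> \<in> space M. real m / Q < Hold k \<omega>})"
  have A_sets[measurable]: "A m \<in> sets M" for m unfolding A_def E0_def by measurable
  have ptw: "ennreal (Hold k \<omega>) * indicator E0 \<omega> \<le> (\<Sum>m. ennreal (1 / Q) * indicator (A m) \<omega>)" for \<omega>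
  proof (cases "\<omega> \<in> E0")
    case False then show ?thesis by simp
  next
    case True
    then have sp: "\<omega> \<in> space M" and hpos: "0 < Hold k \<omega>" unfolding E0_def EE_def by auto
    define h where "h = Hold k \<omega>"
    define K where "K = nat \<lceil>Q * h\<rceil>"
    have Qh: "0 < Q * h" using Q hpos unfolding h_def by simp
    have "Q * h \<le> real K" unfolding K_def using Qh by linarith
    then have hK: "h \<le> real K / Q" using Q by (simp add: field_simps)
    have inA: "\<omega> \<in> A m" if "m < K" for m
    proof -
      have "int m < \<lceil>Q * h\<rceil>" using that Qh unfolding K_def by linarith
      then have "real m < Q * h" by (simp add: less_ceiling_iff)
      then have "real m / Q < h" using Q by (simp add: field_simps)
      then show ?thesis unfolding A_def h_def using True sp by simp
    qed
    have "ennreal (Hold k \<omega>) * indicator E0 \<omega> = ennreal h" using True unfolding h_def by simp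
    also have "\<dots> \<le> ennreal (real K / Q)" using hK by (rule ennreal_leI)
    also have "real K / Q = (\<Sum>m<K. 1 / Q)" by simp
    also have "ennreal (\<Sum>m<K. 1 / Q) = (\<Sum>m<K. ennreal (1 / Q))"
      using Q by (intro sum_ennreal[symmetric]) auto
    also have "\<dots> = (\<Sum>m<K. ennreal (1 / Q) * indicator (A m) \<omega>)"
      using inA by (intro sum.cong) auto
    also have "\<dots> \<le> (\<Sum>m. ennreal (1 / Q) * indicator (A m) \<omega>)"
      by (intro sum_le_suminf summableI) auto
    finally show ?thesis .
  qed
  have emA: "emeasure M (A m) = ennreal (pp w k * exp (-1) ^ m)" for m
  proof -
    define t where "t = (\<lambda>i. if i = k then real m / Q else 0)"
    have t0: "\<forall>i\<le>k. 0 \<le> t i" unfolding t_def using Q by auto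
    have "A m = {\<omega> \<in> space M. \<forall>i\<le>k. Y i \<omega> = w i \<and> t i < Hold i \<omega>}"
    proof (intro set_eqI iffI)
      fix \<omega> assume "\<omega> \<in> A m" then show "\<omega> \<in> {\<omega> \<in> space M. \<forall>i\<le>k. Y i \<omega> = w i \<and> t i < Hold i \<omega>}"
        unfolding A_def E0_def EE_def t_def by auto
    next
      fix \<omega> assume h: "\<omega> \<in> {\<omega> \<in> space M. \<forall>i\<le>k. Y i \<omega> = w i \<and> t i < Hold i \<omega>}"
      have "0 < Hold j \<omega>" if "j \<le> k" for j
      proof -
        have "t j < Hold j \<omega>" using h that by auto
        moreover have "0 \<le> t j" using t0 that by auto
        ultimately show ?thesis by linarith
      qed
      then show "\<omega> \<in> A m" using h unfolding A_def E0_def EE_def t_def by (auto split: if_splits)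
    qed
    moreover have "(\<Prod>i\<le>k. exp (- qr (w i) * t i)) = exp (-1) ^ m"
    proof -
      have "(\<Prod>i\<le>k. exp (- qr (w i) * t i)) = exp (- qr (w k) * t k) * (\<Prod>i<k. exp (- qr (w i) * t i))"
        by (simp add: lessThan_Suc_atMost[symmetric])
      also have "(\<Prod>i<k. exp (- qr (w i) * t i)) = 1" unfolding t_def by (intro prod.neutral) auto
      also have "exp (- qr (w k) * t k) = exp (real m * (-1))" unfolding t_def Q_def[symmetric] using Q by simp
      also have "exp (real m * (-1)) = exp (-1) ^ m" by (rule exp_of_nat_mult)
      finally show ?thesis by simp
    qed
    ultimately have "measure M (A m) = pp w k * exp (-1) ^ m" using cyl[OF t0, of w] by simp
    then show ?thesis by (simp add: emeasure_eq_measure)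
  qed
  have e1: "norm (exp (-1::real)) < 1" by simp
  have "(\<integral>\<^sup>+\<omega>. ennreal (Hold k \<omega>) * indicator (EE N w k 0) \<omega> \<partial>M)
      \<le> (\<integral>\<^sup>+\<omega>. (\<Sum>m. ennreal (1 / Q) * indicator (A m) \<omega>) \<partial>M)"
    unfolding E0_def[symmetric] by (intro nn_integral_mono ptw)
  also have "\<dots> = (\<Sum>m. \<integral>\<^sup>+\<omega>. ennreal (1 / Q) * indicator (A m) \<omega> \<partial>M)"
    by (intro nn_integral_suminf) measurable
  also have "\<dots> = (\<Sum>m. ennreal (1 / Q) * ennreal (pp w k * exp (-1) ^ m))"
    by (simp add: nn_integral_cmult_indicator emA)
  also have "\<dots> = (\<Sum>m. ennreal (1 / Q * pp w k) * ennreal (exp (-1) ^ m))"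
  proof (intro suminf_cong)
    fix m
    have "0 \<le> 1 / Q" "0 \<le> pp w k" using Q pp_nonneg by auto
    then have e: "ennreal (1 / Q * pp w k) = ennreal (1 / Q) * ennreal (pp w k)"
      by (intro ennreal_mult') auto
    have e2: "ennreal (pp w k * exp (-1) ^ m) = ennreal (pp w k) * ennreal (exp (-1) ^ m)"
      using pp_nonneg by (intro ennreal_mult') auto
    show "ennreal (1 / Q) * ennreal (pp w k * exp (-1) ^ m) = ennreal (1 / Q * pp w k) * ennreal (exp (-1) ^ m)"
      unfolding e e2 by (simp only: mult.assoc)
  qed
  also have "\<dots> = ennreal (1 / Q * pp w k) * (\<Sum>m. ennreal (exp (-1) ^ m))"
    by (rule ennreal_suminf_cmult)
  also have "(\<Sum>m. ennreal (exp (-1) ^ m)) = ennreal (\<Sum>m. exp (-1) ^ m)"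
    by (intro suminf_ennreal2 summable_geometric e1) auto
  also have "(\<Sum>m. exp (-1::real) ^ m) = K0" unfolding K0_def by (rule suminf_geometric[OF e1])
  also have "ennreal (1 / Q * pp w k) * ennreal K0 = ennreal (K0 * pp w k / qr (w k))"
    using Q pp_nonneg unfolding Q_def K0_def by (simp add: ennreal_mult[symmetric] field_simps)
  finally show ?thesis .
qed

end

context chainL begin

primrec hh :: "int \<Rightarrow> nat \<Rightarrow> int \<Rightarrow> real" where
  "hh N 0 x = 1"
| "hh N (Suc n) x = (\<Sum>\<eta>\<in>\<Gamma>. jp x (x + \<eta>) * (if N \<le> x + \<eta> then hh N n (x + \<eta>) else 0))"

primrec gg :: "int \<Rightarrow> nat \<Rightarrow> int \<Rightarrow> real" where
  "gg N 0 x = 1 / qr x"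
| "gg N (Suc n) x = (\<Sum>\<eta>\<in>\<Gamma>. jp x (x + \<eta>) * (if N \<le> x + \<eta> then gg N n (x + \<eta>) else 0))"

lemma hh_nonneg: "0 \<le> hh N n x"
  by (induction n arbitrary: x) (auto intro!: sum_nonneg mult_nonneg_nonneg jp_nonneg)

lemma gg_nonneg: "0 \<le> gg N n x"
  by (induction n arbitrary: x) (auto intro!: sum_nonneg mult_nonneg_nonneg jp_nonneg simp: qr_nonneg)

lemma L1: "emeasure M (EE N w k n) = ennreal (pp w k * hh N n (w k))"
proof (induction n arbitrary: w k)
  case 0
  then show ?case by (simp add: base1)
next
  case (Suc n)
  have "emeasure M (EE N w k (Suc n)) = (\<integral>\<^sup>+\<omega>. 1 * indicator (EE N w k (Suc n)) \<omega> \<partial>M)"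
    by simp
  also have "\<dots> = (\<Sum>y\<in>TT N (w k). \<integral>\<^sup>+\<omega>. 1 * indicator (EE N (w(Suc k := y)) (Suc k) n) \<omega> \<partial>M)"
    by (rule split) simp
  also have "\<dots> = (\<Sum>y\<in>TT N (w k). ennreal (pp w k * (jp (w k) y * hh N n y)))"
  proof (intro sum.cong refl)
    fix y
    have "(\<integral>\<^sup>+\<omega>. 1 * indicator (EE N (w(Suc k := y)) (Suc k) n) \<omega> \<partial>M) = emeasure M (EE N (w(Suc k := y)) (Suc k) n)"
      by simp
    also have "\<dots> = ennreal (pp (w(Suc k := y)) (Suc k) * hh N n ((w(Suc k := y)) (Suc k)))"
      by (rule Suc.IH)
    also have "\<dots> = ennreal (pp w k * (jp (w k) y * hh N n y))"
      by (simp only: pp_upd fun_upd_same mult.assoc)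
    finally show "(\<integral>\<^sup>+\<omega>. 1 * indicator (EE N (w(Suc k := y)) (Suc k) n) \<omega> \<partial>M) = ennreal (pp w k * (jp (w k) y * hh N n y))" .
  qed
  also have "\<dots> = ennreal (\<Sum>y\<in>TT N (w k). pp w k * (jp (w k) y * hh N n y))"
    using pp_nonneg jp_nonneg hh_nonneg by (intro sum_ennreal) (auto intro!: mult_nonneg_nonneg)
  also have "(\<Sum>y\<in>TT N (w k). pp w k * (jp (w k) y * hh N n y)) = pp w k * hh N (Suc n) (w k)"
    by (simp add: sum_distrib_left[symmetric] TT_reindex)
  finally show ?case .
qed

lemma L2: "w k \<in> S \<Longrightarrow>
  (\<integral>\<^sup>+\<omega>. ennreal (Hold (k + n) \<omega>) * indicator (EE N w k n) \<omega> \<partial>M) \<le> ennreal (K0 * pp w k * gg N n (w k))"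
proof (induction n arbitrary: w k)
  case 0
  then show ?case using base2[of w k N] by simp
next
  case (Suc n)
  have K0: "0 \<le> K0" unfolding K0_def by simp
  have "(\<integral>\<^sup>+\<omega>. ennreal (Hold (k + Suc n) \<omega>) * indicator (EE N w k (Suc n)) \<omega> \<partial>M)
     = (\<Sum>y\<in>TT N (w k). \<integral>\<^sup>+\<omega>. ennreal (Hold (Suc k + n) \<omega>) * indicator (EE N (w(Suc k := y)) (Suc k) n) \<omega> \<partial>M)"
    by (simp add: split)
  also have "\<dots> \<le> (\<Sum>y\<in>TT N (w k). ennreal (K0 * pp w k * (jp (w k) y * gg N n y)))"
  proof (intro sum_mono)
    fix y assume "y \<in> TT N (w k)"
    then have "y \<in> S" using jp_nz unfolding TT_def by auto
    then have "(\<integral>\<^sup>+\<omega>. ennreal (Hold (Suc k + n) \<omega>) * indicator (EE N (w(Suc k := y)) (Suc k) n) \<omega> \<partial>M)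
        \<le> ennreal (K0 * pp (w(Suc k := y)) (Suc k) * gg N n ((w(Suc k := y)) (Suc k)))"
      by (intro Suc.IH) simp
    also have "ennreal (K0 * pp (w(Suc k := y)) (Suc k) * gg N n ((w(Suc k := y)) (Suc k))) = ennreal (K0 * pp w k * (jp (w k) y * gg N n y))"
      by (simp only: pp_upd fun_upd_same mult.assoc)
    finally show "(\<integral>\<^sup>+\<omega>. ennreal (Hold (Suc k + n) \<omega>) * indicator (EE N (w(Suc k := y)) (Suc k) n) \<omega> \<partial>M)
        \<le> ennreal (K0 * pp w k * (jp (w k) y * gg N n y))" .
  qed
  also have "\<dots> = ennreal (\<Sum>y\<in>TT N (w k). K0 * pp w k * (jp (w k) y * gg N n y))"
    using pp_nonneg jp_nonneg gg_nonneg K0 by (intro sum_ennreal) (auto intro!: mult_nonneg_nonneg)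
  also have "(\<Sum>y\<in>TT N (w k). K0 * pp w k * (jp (w k) y * gg N n y)) = K0 * pp w k * gg N (Suc n) (w k)"
    by (simp add: sum_distrib_left[symmetric] TT_reindex)
  finally show ?case .
qed

end

lemma gA_mono: fixes a b :: real assumes "16 \<le> a" "a \<le> b" shows "gA b \<le> gA a"
proof -
  note la = ln16[OF assms(1)] and m = mono_aux[OF assms]
  show ?thesis unfolding gA_def using la m by (intro divide_left_mono) auto
qed

lemma gA_strict: fixes a b :: real assumes "16 \<le> a" "a < b" shows "gA b < gA a"
proof -
  note la = ln16[OF assms(1)]
  have "ln a < ln b" using assms la by simp
  then have l: "ln (ln a) < ln (ln b)" using la by simp
  have p: "0 < ln (ln a)" by (rule la(3))
  then have p2: "0 < ln (ln b)" using l by linarith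
  have pp: "0 < ln (ln b) * ln (ln a)" by (rule mult_pos_pos[OF p2 p])
  show ?thesis unfolding gA_def by (rule divide_strict_left_mono[OF l _ pp]) simp
qed

lemma ffA_nonneg: "0 \<le> ffA y"
  unfolding ffA_def gA_def using ln16(3)[of "max (real_of_int y) 16"] by simp

lemma ffA_pos: "0 < ffA y"
  unfolding ffA_def gA_def using ln16(3)[of "max (real_of_int y) 16"] by simp

lemma ffA_ge: assumes "16 \<le> N" "y \<le> N" shows "ffA N \<le> ffA y"
  unfolding ffA_def using assms by (intro gA_mono) auto

lemma ffA_less: assumes "16 \<le> N" "N < z" shows "ffA z < ffA N"
  unfolding ffA_def using assms by (intro gA_strict) auto

context chainL begin

lemma Pform: assumes dr: "\<forall>x\<in>S. N \<le> x \<longrightarrow> (\<Sum>\<eta>\<in>\<Gamma>. lam \<eta> x * (ffA (x + \<eta>) - ffA x)) \<le> -1"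
  and xS: "x \<in> S" and xN: "N \<le> x"
  shows "(\<Sum>\<eta>\<in>\<Gamma>. jp x (x + \<eta>) * ffA (x + \<eta>)) \<le> ffA x - 1 / qr x"
proof -
  have q: "0 < qr x" by (rule qr_pos[OF xS])
  have "(\<Sum>\<eta>\<in>\<Gamma>. jp x (x + \<eta>) * ffA (x + \<eta>)) - ffA x
      = (\<Sum>\<eta>\<in>\<Gamma>. jp x (x + \<eta>) * ffA (x + \<eta>)) - (\<Sum>\<eta>\<in>\<Gamma>. jp x (x + \<eta>)) * ffA x"
    using jp_sum[OF xS] by simp
  also have "(\<Sum>\<eta>\<in>\<Gamma>. jp x (x + \<eta>)) * ffA x = (\<Sum>\<eta>\<in>\<Gamma>. jp x (x + \<eta>) * ffA x)"
    by (rule sum_distrib_right)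
  also have "(\<Sum>\<eta>\<in>\<Gamma>. jp x (x + \<eta>) * ffA (x + \<eta>)) - (\<Sum>\<eta>\<in>\<Gamma>. jp x (x + \<eta>) * ffA x)
      = (\<Sum>\<eta>\<in>\<Gamma>. jp x (x + \<eta>) * (ffA (x + \<eta>) - ffA x))"
    by (simp add: sum_subtractf[symmetric] right_diff_distrib)
  also have "\<dots> = (\<Sum>\<eta>\<in>\<Gamma>. lam \<eta> x * (ffA (x + \<eta>) - ffA x) / qr x)"
    by (intro sum.cong refl) (simp add: jp_eta)
  also have "\<dots> = (\<Sum>\<eta>\<in>\<Gamma>. lam \<eta> x * (ffA (x + \<eta>) - ffA x)) / qr x"
    by (simp add: sum_divide_distrib)
  also have "\<dots> \<le> -1 / qr x" using dr xS xN q by (intro divide_right_mono) auto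
  finally show ?thesis by simp
qed

lemma hh_lower:
  assumes N16: "16 \<le> N" and dr: "\<forall>x\<in>S. N \<le> x \<longrightarrow> (\<Sum>\<eta>\<in>\<Gamma>. lam \<eta> x * (ffA (x + \<eta>) - ffA x)) \<le> -1"
  shows "x \<in> S \<Longrightarrow> N \<le> x \<Longrightarrow> 1 - ffA x / ffA N \<le> hh N n x"
proof (induction n arbitrary: x)
  case 0
  then show ?case using ffA_nonneg ffA_pos[of N] by simp
next
  case (Suc n)
  define c where "c = ffA N"
  have c: "0 < c" unfolding c_def by (rule ffA_pos)
  have tm: "jp x (x + \<eta>) * (1 - ffA (x + \<eta>) / c)
      \<le> jp x (x + \<eta>) * (if N \<le> x + \<eta> then hh N n (x + \<eta>) else 0)" for \<eta>
  proof (cases "jp x (x + \<eta>) = 0")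
    case True then show ?thesis by simp
  next
    case False
    then have yS: "x + \<eta> \<in> S" using jp_nz by auto
    show ?thesis
    proof (cases "N \<le> x + \<eta>")
      case True
      then show ?thesis using Suc.IH[OF yS True] jp_nonneg unfolding c_def
        by (simp add: mult_left_mono)
    next
      case False
      then have "c \<le> ffA (x + \<eta>)" unfolding c_def using ffA_ge[OF N16] by simp
      then have "1 - ffA (x + \<eta>) / c \<le> 0" using c by (simp add: field_simps)
      then show ?thesis using False jp_nonneg by (simp add: mult_nonneg_nonpos)
    qed
  qed
  have "1 - ffA x / c \<le> 1 - (\<Sum>\<eta>\<in>\<Gamma>. jp x (x + \<eta>) * ffA (x + \<eta>)) / c"
  proof -
    have "(\<Sum>\<eta>\<in>\<Gamma>. jp x (x + \<eta>) * ffA (x + \<eta>)) \<le> ffA x"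
    proof -
      have "0 \<le> 1 / qr x" using qr_nonneg[of x] by simp
      then show ?thesis using Pform[OF dr Suc.prems] by linarith
    qed
    then show ?thesis using c by (simp add: divide_right_mono)
  qed
  also have "\<dots> = (\<Sum>\<eta>\<in>\<Gamma>. jp x (x + \<eta>) * (1 - ffA (x + \<eta>) / c))"
  proof -
    have "(\<Sum>\<eta>\<in>\<Gamma>. jp x (x + \<eta>) * (1 - ffA (x + \<eta>) / c))
        = (\<Sum>\<eta>\<in>\<Gamma>. jp x (x + \<eta>) - jp x (x + \<eta>) * ffA (x + \<eta>) / c)"
      by (intro sum.cong refl) (simp add: right_diff_distrib)
    also have "\<dots> = (\<Sum>\<eta>\<in>\<Gamma>. jp x (x + \<eta>)) - (\<Sum>\<eta>\<in>\<Gamma>. jp x (x + \<eta>) * ffA (x + \<eta>) / c)"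
      by (rule sum_subtractf)
    also have "\<dots> = 1 - (\<Sum>\<eta>\<in>\<Gamma>. jp x (x + \<eta>) * ffA (x + \<eta>)) / c"
      using jp_sum[OF Suc.prems(1)] by (simp add: sum_divide_distrib)
    finally show ?thesis by simp
  qed
  also have "\<dots> \<le> hh N (Suc n) x" unfolding hh.simps by (intro sum_mono tm)
  finally show ?case unfolding c_def .
qed

lemma gg_upper:
  assumes N16: "16 \<le> N" and dr: "\<forall>x\<in>S. N \<le> x \<longrightarrow> (\<Sum>\<eta>\<in>\<Gamma>. lam \<eta> x * (ffA (x + \<eta>) - ffA x)) \<le> -1"
  shows "x \<in> S \<Longrightarrow> N \<le> x \<Longrightarrow> (\<Sum>i\<le>n. gg N i x) \<le> ffA x"
proof (induction n arbitrary: x)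
  case 0
  have "0 \<le> (\<Sum>\<eta>\<in>\<Gamma>. jp x (x + \<eta>) * ffA (x + \<eta>))"
    by (intro sum_nonneg mult_nonneg_nonneg jp_nonneg ffA_nonneg)
  then show ?case using Pform[OF dr 0] by simp
next
  case (Suc n)
  have tm: "jp x (x + \<eta>) * (if N \<le> x + \<eta> then (\<Sum>i\<le>n. gg N i (x + \<eta>)) else 0)
      \<le> jp x (x + \<eta>) * ffA (x + \<eta>)" for \<eta>
  proof (cases "jp x (x + \<eta>) = 0")
    case True then show ?thesis by simp
  next
    case False
    then have yS: "x + \<eta> \<in> S" using jp_nz by auto
    show ?thesis
    proof (cases "N \<le> x + \<eta>")
      case True
      have "jp x (x + \<eta>) * (\<Sum>i\<le>n. gg N i (x + \<eta>)) \<le> jp x (x + \<eta>) * ffA (x + \<eta>)"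
        by (rule mult_left_mono[OF Suc.IH[OF yS True] jp_nonneg])
      then show ?thesis using True by simp
    next
      case False
      then show ?thesis using mult_nonneg_nonneg[OF jp_nonneg ffA_nonneg] by simp
    qed
  qed
  have A: "(\<Sum>i\<le>Suc n. gg N i x) = gg N 0 x + (\<Sum>i\<le>n. gg N (Suc i) x)"
    by (rule sum.atMost_Suc_shift)
  have "(\<Sum>i\<le>n. gg N (Suc i) x)
      = (\<Sum>i\<le>n. \<Sum>\<eta>\<in>\<Gamma>. jp x (x + \<eta>) * (if N \<le> x + \<eta> then gg N i (x + \<eta>) else 0))"
    by (simp only: gg.simps)
  also have "\<dots> = (\<Sum>\<eta>\<in>\<Gamma>. \<Sum>i\<le>n. jp x (x + \<eta>) * (if N \<le> x + \<eta> then gg N i (x + \<eta>) else 0))"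
    by (rule sum.swap)
  also have "\<dots> = (\<Sum>\<eta>\<in>\<Gamma>. jp x (x + \<eta>) * (if N \<le> x + \<eta> then (\<Sum>i\<le>n. gg N i (x + \<eta>)) else 0))"
  proof (intro sum.cong refl)
    fix \<eta>
    show "(\<Sum>i\<le>n. jp x (x + \<eta>) * (if N \<le> x + \<eta> then gg N i (x + \<eta>) else 0)) =
      jp x (x + \<eta>) * (if N \<le> x + \<eta> then (\<Sum>i\<le>n. gg N i (x + \<eta>)) else 0)"
      by (cases "N \<le> x + \<eta>") (simp_all add: sum_distrib_left)
  qed
  also have "\<dots> \<le> (\<Sum>\<eta>\<in>\<Gamma>. jp x (x + \<eta>) * ffA (x + \<eta>))"
    by (intro sum_mono tm)
  also have "\<dots> \<le> ffA x - 1 / qr x" by (rule Pform[OF dr Suc.prems])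
  finally have B: "(\<Sum>i\<le>n. gg N (Suc i) x) \<le> ffA x - 1 / qr x" .
  have "gg N 0 x = 1 / qr x" by simp
  then show ?case using A B by linarith
qed

lemma reach:
  assumes "(a, b) \<in> {(a, a + \<eta>) | a \<eta>. a \<in> S \<and> \<eta> \<noteq> 0 \<and> lam \<eta> a > 0}\<^sup>*"
  shows "\<exists>k w. w 0 = a \<and> w k = b \<and> (\<forall>i<k. 0 < jp (w i) (w (Suc i)))"
  using assms
proof (induction rule: rtrancl_induct)
  case base
  show ?case by (intro exI[of _ 0] exI[of _ "\<lambda>_. a"]) auto
next
  case (step b c)
  obtain k w where w: "w 0 = a" "w k = b" "\<forall>i<k. 0 < jp (w i) (w (Suc i))" using step.IH by blast
  obtain \<eta> where e: "c = b + \<eta>" "b \<in> S" "\<eta> \<noteq> 0" "lam \<eta> b > 0" using step.hyps(2) by auto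
  have "0 < jp b c" unfolding e(1) jp_eta using e qr_pos[OF e(2)] by simp
  show ?case
  proof (intro exI[of _ "Suc k"] exI[of _ "w(Suc k := c)"] conjI allI impI)
    show "(w(Suc k := c)) 0 = a" using w by simp
    show "(w(Suc k := c)) (Suc k) = c" by simp
    fix i assume "i < Suc k"
    then have "i < k \<or> i = k" by auto
    then show "0 < jp ((w(Suc k := c)) i) ((w(Suc k := c)) (Suc i))"
      using w \<open>0 < jp b c\<close> by auto
  qed
qed

end

context chainL begin

lemma final:
  assumes N16: "16 \<le> N" and dr: "\<forall>x\<in>S. N \<le> x \<longrightarrow> (\<Sum>\<eta>\<in>\<Gamma>. lam \<eta> x * (ffA (x + \<eta>) - ffA x)) \<le> -1"
    and rch: "(x0, z) \<in> {(a, a + \<eta>) | a \<eta>. a \<in> S \<and> \<eta> \<noteq> 0 \<and> lam \<eta> a > 0}\<^sup>*"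
    and zS: "z \<in> S" and zN: "N < z"
  shows "explosive M Hold"
proof -
  obtain k w where w: "w 0 = x0" "w k = z" "\<forall>i<k. 0 < jp (w i) (w (Suc i))"
    using reach[OF rch] by blast
  define p where "p = pp w k"
  have p: "0 < p" unfolding p_def pp_def using w by (auto intro!: prod_pos)
  define E where "E = (\<lambda>n. EE N w k n)"
  have Esets[measurable]: "E n \<in> sets M" for n unfolding E_def by simp
  have Edec: "decseq E" unfolding E_def by (intro decseq_SucI EE_mono)
  define \<beta> where "\<beta> = p * (1 - ffA z / ffA N)"
  have \<beta>: "0 < \<beta>"
  proof -
    have "ffA z / ffA N < 1" using ffA_less[OF N16 zN] ffA_pos[of N] by simp
    then show ?thesis unfolding \<beta>_def using p by simp
  qed
  have zN': "N \<le> z" using zN by simp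
  have mE: "\<beta> \<le> measure M (E n)" for n
  proof -
    have "measure M (E n) = p * hh N n z"
      unfolding E_def measure_def L1 p_def using w pp_nonneg hh_nonneg by simp
    moreover have "1 - ffA z / ffA N \<le> hh N n z" by (rule hh_lower[OF N16 dr zS zN'])
    ultimately show ?thesis unfolding \<beta>_def using p by simp
  qed
  define Einf where "Einf = (\<Inter>n. E n)"
  have Einf_sets[measurable]: "Einf \<in> sets M" unfolding Einf_def by measurable
  have mEinf: "\<beta> \<le> measure M Einf"
  proof -
    have "(\<lambda>n. measure M (E n)) \<longlonglongrightarrow> measure M Einf"
      unfolding Einf_def by (rule finite_Lim_measure_decseq) (use Edec in auto)
    then show ?thesis by (rule LIMSEQ_le_const) (use mE in auto)
  qed
  have K0: "0 \<le> K0" unfolding K0_def by simp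
  define B where "B = K0 * p * ffA z"
  have int_i: "(\<integral>\<^sup>+\<omega>. ennreal (Hold (k + i) \<omega>) * indicator Einf \<omega> \<partial>M) \<le> ennreal (K0 * p * gg N i z)" for i
  proof -
    have "(\<integral>\<^sup>+\<omega>. ennreal (Hold (k + i) \<omega>) * indicator Einf \<omega> \<partial>M)
        \<le> (\<integral>\<^sup>+\<omega>. ennreal (Hold (k + i) \<omega>) * indicator (EE N w k i) \<omega> \<partial>M)"
    proof (intro nn_integral_mono)
      fix \<omega>
      have "indicator Einf \<omega> \<le> (indicator (EE N w k i) \<omega> :: ennreal)"
        unfolding Einf_def E_def by (auto simp: indicator_def)
      then show "ennreal (Hold (k + i) \<omega>) * indicator Einf \<omega> \<le> ennreal (Hold (k + i) \<omega>) * indicator (EE N w k i) \<omega>"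
        by (intro mult_left_mono) auto
    qed
    also have "\<dots> \<le> ennreal (K0 * pp w k * gg N i (w k))" by (rule L2) (use w zS in simp)
    finally show ?thesis unfolding p_def using w by simp
  qed
  have partial: "(\<Sum>i<n. ennreal (K0 * p * gg N i z)) \<le> ennreal B" for n
  proof -
    have s1: "(\<Sum>i<n. gg N i z) \<le> ffA z"
    proof -
      have "(\<Sum>i<n. gg N i z) \<le> (\<Sum>i\<le>n. gg N i z)"
        using gg_nonneg by (intro sum_mono2) auto
      also have "\<dots> \<le> ffA z" by (rule gg_upper[OF N16 dr zS zN'])
      finally show ?thesis .
    qed
    have "(\<Sum>i<n. ennreal (K0 * p * gg N i z)) = ennreal (\<Sum>i<n. K0 * p * gg N i z)"
      using K0 p gg_nonneg by (intro sum_ennreal) (auto intro!: mult_nonneg_nonneg)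
    also have "(\<Sum>i<n. K0 * p * gg N i z) = K0 * p * (\<Sum>i<n. gg N i z)"
      by (simp add: sum_distrib_left)
    finally have e: "(\<Sum>i<n. ennreal (K0 * p * gg N i z)) = ennreal (K0 * p * (\<Sum>i<n. gg N i z))" .
    have "K0 * p * (\<Sum>i<n. gg N i z) \<le> K0 * p * ffA z"
      using K0 p s1 by (intro mult_left_mono) auto
    then show ?thesis unfolding e B_def by (rule ennreal_leI)
  qed
  define G where "G = (\<lambda>\<omega>. \<Sum>i. ennreal (Hold (k + i) \<omega>) * indicator Einf \<omega>)"
  have "(\<integral>\<^sup>+\<omega>. G \<omega> \<partial>M) = (\<Sum>i. \<integral>\<^sup>+\<omega>. ennreal (Hold (k + i) \<omega>) * indicator Einf \<omega> \<partial>M)"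
    unfolding G_def by (intro nn_integral_suminf) measurable
  also have "\<dots> \<le> (\<Sum>i. ennreal (K0 * p * gg N i z))"
    by (intro suminf_le int_i summableI)
  also have "\<dots> \<le> ennreal B"
    using ennreal_suminf_bound_add[of "\<lambda>i. ennreal (K0 * p * gg N i z)" 0 "ennreal B"] partial by simp
  finally have intG: "(\<integral>\<^sup>+\<omega>. G \<omega> \<partial>M) \<noteq> \<infinity>" by (auto simp: top_unique)
  have Gmeas: "G \<in> borel_measurable M" unfolding G_def by measurable
  have aeG: "AE \<omega> in M. G \<omega> \<noteq> \<infinity>" by (rule nn_integral_noteq_infinite[OF Gmeas intG])
  define Cset where "Cset = {\<omega> \<in> space M. convergent (\<lambda>n. \<Sum>i<n. Hold i \<omega>)}"
  have Cset_eq: "Cset = {\<omega> \<in> space M. Cauchy (\<lambda>n. \<Sum>i<n. Hold i \<omega>)}"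
    unfolding Cset_def by (simp add: Cauchy_convergent_iff)
  have Cset_sets: "Cset \<in> sets M" unfolding Cset_eq by measurable
  have ae: "AE \<omega> in M. \<omega> \<in> Einf \<longrightarrow> \<omega> \<in> Cset"
    using aeG AE_space
  proof eventually_elim
    case (elim \<omega>)
    show ?case
    proof
      assume om: "\<omega> \<in> Einf"
      have hpos: "0 \<le> Hold j \<omega>" for j
      proof -
        have "\<omega> \<in> EE N w k j" using om unfolding Einf_def E_def by auto
        then show ?thesis unfolding EE_def by (auto simp: less_imp_le)
      qed
      have "G \<omega> = (\<Sum>i. ennreal (Hold (k + i) \<omega>))" unfolding G_def using om by simp
      then have "(\<Sum>i. ennreal (Hold (k + i) \<omega>)) \<noteq> top" using elim by simp
      then have "summable (\<lambda>i. Hold (k + i) \<omega>)" by (intro summable_suminf_not_top) (use hpos in auto)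
      then have "summable (\<lambda>i. Hold (i + k) \<omega>)" by (simp add: add.commute)
      then have "summable (\<lambda>i. Hold i \<omega>)"
        using summable_iff_shift[of "\<lambda>i. Hold i \<omega>" k] by simp
      then show "\<omega> \<in> Cset" unfolding Cset_def using elim by (simp add: summable_iff_convergent)
    qed
  qed
  have "emeasure M Einf \<le> emeasure M Cset" by (rule emeasure_mono_AE[OF ae Cset_sets])
  then have "measure M Einf \<le> measure M Cset" by (simp add: emeasure_eq_measure)
  then have "0 < measure M Cset" using mEinf \<beta> by linarith
  then show ?thesis unfolding explosive_def Cset_def .
qed

end

theorem mainTheorem6:
  fixes S \<Gamma> :: "int set" and lam :: "int \<Rightarrow> int \<Rightarrow> real" and x0 :: int
    and M :: "'w measure" and Y :: "nat \<Rightarrow> 'w \<Rightarrow> int" and Hold :: "nat \<Rightarrow> 'w \<Rightarrow> real"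
  assumes S_nonneg: "S \<subseteq> {0..}" and S_inf: "infinite S"
    and Gamma_fin: "finite \<Gamma>"
    and rates_supp: "\<forall>\<eta> x. \<eta> \<notin> \<Gamma> \<longrightarrow> lam \<eta> x = 0"
    and rates_nonneg: "\<forall>\<eta> x. 0 \<le> lam \<eta> x"
    and rates_stay: "\<forall>\<eta> x. x + \<eta> \<notin> S \<longrightarrow> lam \<eta> x = 0"
    and irred: "irreducible_chain S lam"
    and v_pos: "\<forall>x\<in>S. vfun \<Gamma> lam x > 0"
    and x0_in: "x0 \<in> S"
    and real: "ctmc_realization \<Gamma> lam x0 M Y Hold"
    and cond_a: "\<exists>c > 2. \<exists>C > 0. \<exists>N. \<forall>x\<in>S. x \<ge> N \<longrightarrow>
                   real_of_int x powr c \<le> C * (drift \<Gamma> lam x * real_of_int x - vfun \<Gamma> lam x)"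
    and cond_b: "Liminf (at_top_in S) (\<lambda>x. ereal (Hfun \<Gamma> lam 1 x)) > 1"
    and cond_c: "\<forall>q > 2.
        Liminf (at_top_in S) (\<lambda>x. ereal (vfun \<Gamma> lam x / ((real_of_int x)^2 * ln (real_of_int x) powr q))) = 0
        \<longrightarrow> ((\<lambda>x. vfun \<Gamma> lam x / ((real_of_int x)^2 * ln (real_of_int x) powr q)) \<longlongrightarrow> 0) (at_top_in S)"
  shows "explosive M Hold"
proof -
  interpret chainL S \<Gamma> lam x0 M Y Hold
    by unfold_locales (use Gamma_fin rates_supp rates_nonneg rates_stay v_pos real in auto)
  obtain N where N16: "16 \<le> N"
    and dr: "\<forall>x\<in>S. N \<le> x \<longrightarrow> (\<Sum>\<eta>\<in>\<Gamma>. lam \<eta> x * (ffA (x + \<eta>) - ffA x)) \<le> -1"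
    using drift_ineq[OF Gamma_fin rates_nonneg v_pos cond_a cond_b] by blast
  obtain z where zS: "z \<in> S" and zN: "N < z"
  proof (rule ccontr)
    assume "\<not> thesis"
    then have "\<forall>z\<in>S. z \<le> N" using that by force
    then have "S \<subseteq> {0..N}" using S_nonneg by auto
    then have "finite S" using finite_subset by blast
    then show False using S_inf by simp
  qed
  have rch: "(x0, z) \<in> {(a, a + \<eta>) | a \<eta>. a \<in> S \<and> \<eta> \<noteq> 0 \<and> lam \<eta> a > 0}\<^sup>*"
    using irred x0_in zS unfolding irreducible_chain_def by blast
  show ?thesis by (rule final[OF N16 dr rch zS zN])
qed

end
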